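(* Let $d\ge 1$ and $n\ge 1$ be integers, let $\vec\alpha_1,\dots,\vec\alpha_n\in\mathbb{T}^d=\mathbb{R}^d/\mathbb{Z}^d$ (viewed as elements of $[0,1)^d$) be arbitrary, and let $Q$ be the probability measure on $\mathbb{T}^d$ assigning mass $\frac{1}{2n}$ to each of the points $+\vec\alpha_i$ and $-\vec\alpha_i$, $i=1,\dots,n$ (counted with multiplicity), i.e. $Q=\frac{1}{2n}\sum_{i=1}^n(\delta_{\vec\alpha_i}+\delta_{-\vec\alpha_i})$. Then for every positive integer $k$, the $k$-th convolution power $Q^{*k}$ satisfies $$D(Q^{*k})\ \ge\ \frac{1}{\pi^d\, 5^{n+1}\, d^{n/2}}\; k^{-n/2}.$$
   Context: $Q^{*k}$ is the $k$-fold convolution of $Q$ on the additive group $\mathbb{T}^d$; it is the distribution after $k$ steps of the random walk started at $\vec 0$ which at each step picks one of the $\vec\alpha_i$ uniformly at random and adds or subtracts it (each with probability $1/2$), coordinates taken mod 1. Let $U$ denote Haar (uniform Lebesgue) measure on $\mathbb{T}^d$. A box in $\mathbb{T}^d$ is a set of the form $[a_1,b_1)\times\cdots\times[a_d,b_d)$ (sides parallel to the axes, interpreted mod 1). The discrepancy of a probability measure $P$ on $\mathbb{T}^d$ is $D(P)=\sup_{B\text{ box}}|P(B)-U(B)|$. *)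

theory Defs
  imports "HOL-Analysis.Analysis" "HOL-Probability.Probability"
begin

text \<open>Points of the torus T^d = R^d / Z^d are represented by their
  representatives in [0,1)^d; the index type 'd has CARD('d) = d elements.\<close>

definition torus :: "(real ^ 'd) set" where
  "torus = {x. \<forall>j. 0 \<le> x $ j \<and> x $ j < 1}"

definition tmod :: "real ^ 'd \<Rightarrow> real ^ 'd" where
  "tmod x = (\<chi> j. frac (x $ j))"

definition stepQ :: "nat \<Rightarrow> (nat \<Rightarrow> real ^ 'd) \<Rightarrow> (real ^ 'd) pmf" where
  "stepQ n \<alpha> = map_pmf (\<lambda>(i, s). tmod (s *\<^sub>R \<alpha> i))
                       (pmf_of_set ({..<n} \<times> {1, -1 :: real}))"

definition tconv :: "(real ^ 'd) pmf \<Rightarrow> (real ^ 'd) pmf \<Rightarrow> (real ^ 'd) pmf" where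
  "tconv P R = bind_pmf P (\<lambda>x. map_pmf (\<lambda>y. tmod (x + y)) R)"

primrec conv_pow :: "(real ^ 'd) pmf \<Rightarrow> nat \<Rightarrow> (real ^ 'd) pmf" where
  "conv_pow Q 0 = return_pmf 0"
| "conv_pow Q (Suc k) = tconv (conv_pow Q k) Q"

text \<open>Boxes in T^d, sides parallel to the axes, interpreted mod 1: the product
  of arcs [a_j, a_j + L_j) mod 1 with 0 \<le> L_j \<le> 1 (so [a_j,b_j) with b_j = a_j + L_j),
  as subsets of the fundamental domain [0,1)^d.\<close>
definition torus_box :: "real ^ 'd \<Rightarrow> real ^ 'd \<Rightarrow> (real ^ 'd) set" where
  "torus_box a L = {x \<in> torus. \<forall>j. frac (x $ j - a $ j) < L $ j}"

definition torus_boxes :: "((real ^ 'd) set) set" where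
  "torus_boxes = {torus_box a L | a L. \<forall>j. 0 \<le> L $ j \<and> L $ j \<le> 1}"

text \<open>Haar measure on T^d: Lebesgue measure on the fundamental domain [0,1)^d.\<close>
definition haarU :: "(real ^ 'd) set \<Rightarrow> real" where
  "haarU B = measure lborel (B \<inter> torus)"

definition discrepancy :: "(real ^ 'd) pmf \<Rightarrow> real" where
  "discrepancy P = (SUP B \<in> torus_boxes. \<bar>measure_pmf.prob P B - haarU B\<bar>)"

end

theory Submission
  imports Defs
begin

definition P0 :: "nat \<Rightarrow> (nat \<times> int) pmf" where
  "P0 n = pmf_of_set ({..<n} \<times> {1, -1})"

primrec walk :: "nat \<Rightarrow> nat \<Rightarrow> (nat \<Rightarrow> int) pmf" where
  "walk n 0 = return_pmf (\<lambda>_. 0)"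
| "walk n (Suc k) = bind_pmf (walk n k) (\<lambda>c. map_pmf (\<lambda>(i,s). c(i := c i + s)) (P0 n))"

definition lift :: "(nat \<Rightarrow> real ^ 'd) \<Rightarrow> nat \<Rightarrow> (nat \<Rightarrow> int) \<Rightarrow> real ^ 'd" where
  "lift \<alpha> n c = tmod (\<Sum>i<n. of_int (c i) *\<^sub>R \<alpha> i)"

lemma P0_set: "n \<ge> 1 \<Longrightarrow> set_pmf (P0 n) = {..<n} \<times> {1, -1}"
  unfolding P0_def by (subst set_pmf_of_set) (auto simp: lessThan_empty_iff)

lemma stepQ_alt:
  assumes "n \<ge> 1"
  shows "stepQ n \<alpha> = map_pmf (\<lambda>(i,s). tmod (of_int s *\<^sub>R \<alpha> i)) (P0 n)"
proof -
  let ?g = "\<lambda>(i::nat, s::int). (i, real_of_int s)"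
  have inj: "inj_on ?g ({..<n} \<times> {1, -1})" by (auto simp: inj_on_def)
  have img: "?g ` ({..<n} \<times> {1, -1}) = {..<n} \<times> {1, -1::real}" by force
  have "pmf_of_set ({..<n} \<times> {1, -1::real}) = map_pmf ?g (P0 n)"
    unfolding P0_def using assms
    by (subst map_pmf_of_set_inj[OF inj]) (auto simp: img lessThan_empty_iff)
  then show ?thesis unfolding stepQ_def by (simp add: map_pmf_comp case_prod_beta')
qed

lemma tmod_add1: "tmod (tmod x + y) = tmod (x + y)"
  by (simp add: tmod_def vec_eq_iff)
lemma tmod_add2: "tmod (x + tmod y) = tmod (x + y)"
  by (simp add: tmod_def vec_eq_iff)

lemma conv_walk:
  assumes "n \<ge> 1"
  shows "conv_pow (stepQ n \<alpha>) k = map_pmf (lift \<alpha> n) (walk n k)"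
proof (induction k)
  case 0
  then show ?case by (simp add: lift_def tmod_def vec_eq_iff)
next
  case (Suc k)
  have key: "tmod (lift \<alpha> n c + tmod (of_int s *\<^sub>R \<alpha> i)) = lift \<alpha> n (c(i := c i + s))"
    if "i < n" for c i s
  proof -
    have "(\<Sum>j<n. of_int ((c(i := c i + s)) j) *\<^sub>R \<alpha> j)
        = (\<Sum>j<n. of_int (c j) *\<^sub>R \<alpha> j + (if j = i then of_int s *\<^sub>R \<alpha> i else 0))"
      by (rule sum.cong) (auto simp: algebra_simps)
    also have "\<dots> = (\<Sum>j<n. of_int (c j) *\<^sub>R \<alpha> j) + of_int s *\<^sub>R \<alpha> i"
      using that by (simp add: sum.distrib)
    finally show ?thesis unfolding lift_def by (simp add: tmod_add1 tmod_add2)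
  qed
  have "conv_pow (stepQ n \<alpha>) (Suc k) = tconv (map_pmf (lift \<alpha> n) (walk n k)) (stepQ n \<alpha>)"
    using Suc by simp
  also have "\<dots> = map_pmf (lift \<alpha> n) (walk n (Suc k))"
    unfolding tconv_def stepQ_alt[OF assms] walk.simps
    using assms
    by (auto simp: bind_map_pmf map_bind_pmf map_pmf_comp P0_set key intro!: bind_pmf_cong map_pmf_cong)
  finally show ?case .
qed

lemma walk_support:
  assumes "n \<ge> 1"
  shows "set_pmf (walk n k) \<subseteq> {c. \<forall>i\<ge>n. c i = 0}"
proof (induction k)
  case 0 then show ?case by simp
next
  case (Suc k)
  then show ?case using assms by (auto simp: P0_set)
qed

definition G :: "nat \<Rightarrow> (nat \<Rightarrow> int) \<Rightarrow> real" where
  "G n c = (\<Sum>i<n. (real_of_int (c i))^2)"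

lemma G_upd:
  assumes "i < n"
  shows "G n (c(i := c i + s)) = G n c + 2 * real_of_int s * real_of_int (c i) + (real_of_int s)^2"
proof -
  have "G n (c(i := c i + s)) = (\<Sum>j<n. (real_of_int (c j))^2 +
      (if j = i then 2 * real_of_int s * real_of_int (c i) + (real_of_int s)^2 else 0))"
    unfolding G_def by (rule sum.cong) (auto simp: power2_eq_square algebra_simps)
  also have "\<dots> = G n c + 2 * real_of_int s * real_of_int (c i) + (real_of_int s)^2"
    using assms by (simp add: sum.distrib G_def)
  finally show ?thesis .
qed

lemma G_sum:
  "(\<Sum>p\<in>{..<n} \<times> {1, -1::int}. G n (case p of (i, s) \<Rightarrow> c(i := c i + s))) = 2 * real n * (G n c + 1)"
proof -
  have "(\<Sum>p\<in>{..<n} \<times> {1, -1::int}. G n (case p of (i, s) \<Rightarrow> c(i := c i + s)))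
     = (\<Sum>i<n. \<Sum>s\<in>{1,-1::int}. G n (c(i := c i + s)))"
    by (subst sum.cartesian_product) (simp add: case_prod_beta')
  also have "\<dots> = (\<Sum>i<n. 2 * (G n c + 1))"
    by (rule sum.cong) (auto simp: G_upd)
  finally show ?thesis by simp
qed

lemma inner_step:
  assumes "n \<ge> 1"
  shows "(\<integral>\<^sup>+p. ennreal (G n (case p of (i, s) \<Rightarrow> c(i := c i + s))) \<partial>P0 n) = ennreal (G n c + 1)"
proof -
  have G0: "G n c' \<ge> 0" for c' unfolding G_def by (auto intro: sum_nonneg)
  have "(\<integral>\<^sup>+p. ennreal (G n (case p of (i, s) \<Rightarrow> c(i := c i + s))) \<partial>P0 n)
      = (\<Sum>p\<in>{..<n} \<times> {1, -1::int}. ennreal (G n (case p of (i, s) \<Rightarrow> c(i := c i + s))))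
         / of_nat (card ({..<n} \<times> {1, -1::int}))"
    unfolding P0_def using assms by (subst nn_integral_pmf_of_set) (auto simp: lessThan_empty_iff)
  also have "\<dots> = ennreal (2 * real n * (G n c + 1)) / ennreal (2 * real n)"
    using G0 by (subst sum_ennreal) (auto simp: G_sum card_cartesian_product ennreal_of_nat_eq_real_of_nat)
  also have "\<dots> = ennreal (G n c + 1)"
    using assms G0 by (subst divide_ennreal) (auto intro: add_nonneg_nonneg)
  finally show ?thesis .
qed

lemma second_moment:
  assumes "n \<ge> 1"
  shows "(\<integral>\<^sup>+c. ennreal (G n c) \<partial>walk n k) = of_nat k"
proof (induction k)
  case 0 then show ?case by (simp add: G_def)
next
  case (Suc k)
  have G0: "G n c' \<ge> 0" for c' unfolding G_def by (auto intro: sum_nonneg)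
  have "(\<integral>\<^sup>+c. ennreal (G n c) \<partial>walk n (Suc k)) = (\<integral>\<^sup>+c. ennreal (G n c + 1) \<partial>walk n k)"
    by (simp add: inner_step[OF assms])
  also have "\<dots> = (\<integral>\<^sup>+c. ennreal (G n c) + 1 \<partial>walk n k)"
    using G0 by (simp add: ennreal_plus)
  also have "\<dots> = (\<integral>\<^sup>+c. ennreal (G n c) \<partial>walk n k) + 1"
    by (subst nn_integral_add) (auto simp: measure_pmf.emeasure_space_1)
  finally show ?case using Suc by simp
qed

lemma markov_walk:
  assumes "n \<ge> 1" "k \<ge> 1"
  shows "measure_pmf.prob (walk n k) {c. 4 * real k \<le> G n c} \<le> 1/4"
proof -
  let ?S = "{c. 4 * real k \<le> G n c}"
  have G0: "G n c' \<ge> 0" for c' unfolding G_def by (auto intro: sum_nonneg)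
  have "ennreal (4 * real k) * emeasure (walk n k) ?S = (\<integral>\<^sup>+c. ennreal (4 * real k) * indicator ?S c \<partial>walk n k)"
    by (simp add: nn_integral_cmult_indicator)
  also have "\<dots> \<le> (\<integral>\<^sup>+c. ennreal (G n c) \<partial>walk n k)"
    by (rule nn_integral_mono) (auto simp: indicator_def)
  also have "\<dots> = ennreal (real k)"
    using second_moment[OF assms(1)] by (simp add: ennreal_of_nat_eq_real_of_nat)
  finally have "ennreal (4 * real k * measure_pmf.prob (walk n k) ?S) \<le> ennreal (real k)"
    by (simp add: measure_pmf.emeasure_eq_measure ennreal_mult)
  then have "4 * real k * measure_pmf.prob (walk n k) ?S \<le> real k"
    by (subst (asm) ennreal_le_iff) auto
  then show ?thesis using assms by (simp add: field_simps)
qed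

lemma card_bound:
  assumes "k \<ge> 1"
  defines "m \<equiv> nat \<lfloor>2 * sqrt (real k)\<rfloor>"
  shows "{c. (\<forall>i\<ge>n. c i = 0) \<and> G n c < 4 * real k}
     \<subseteq> (\<lambda>f i. if i < n then f i else 0) ` (PiE {..<n} (\<lambda>_. {-int m..int m}))"
proof
  fix c assume c: "c \<in> {c. (\<forall>i\<ge>n. c i = 0) \<and> G n c < 4 * real k}"
  have "c i \<in> {-int m..int m}" if "i < n" for i
  proof -
    have "(real_of_int (c i))^2 \<le> G n c"
      unfolding G_def using that by (intro member_le_sum) auto
    with c have "(real_of_int (c i))^2 < (2 * sqrt (real k))^2"
      by (simp add: power_mult_distrib)
    then have "\<bar>real_of_int (c i)\<bar> < 2 * sqrt (real k)"
      using power2_less_imp_less[of "\<bar>real_of_int (c i)\<bar>"] by fastforce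
    then have "\<bar>c i\<bar> \<le> \<lfloor>2 * sqrt (real k)\<rfloor>"
      by (simp add: le_floor_iff)
    moreover have "\<lfloor>2 * sqrt (real k)\<rfloor> \<ge> 0" by simp
    ultimately show ?thesis unfolding m_def by auto
  qed
  then have "restrict c {..<n} \<in> PiE {..<n} (\<lambda>_. {-int m..int m})" by auto
  moreover have "c = (\<lambda>i. if i < n then restrict c {..<n} i else 0)"
    using c by (auto simp: fun_eq_iff)
  ultimately show "c \<in> (\<lambda>f i. if i < n then f i else 0) ` (PiE {..<n} (\<lambda>_. {-int m..int m}))"
    by blast
qed

lemma exists_heavy:
  assumes "n \<ge> 1" "k \<ge> 1"
  shows "\<exists>c. pmf (walk n k) c \<ge> (3/4) / (5 ^ n * real k powr (real n / 2))"
proof -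
  define m where "m = nat \<lfloor>2 * sqrt (real k)\<rfloor>"
  define A where "A = {c. (\<forall>i\<ge>n. c i = 0) \<and> G n c < 4 * real k}"
  define B where "B = (\<lambda>f i. if i < n then f i else (0::int)) ` (PiE {..<n} (\<lambda>_. {-int m..int m}))"
  let ?W = "walk n k"
  have AB: "A \<subseteq> B" unfolding A_def B_def m_def by (rule card_bound[OF assms(2)])
  have finB: "finite B" unfolding B_def by (auto intro!: finite_PiE)
  have cardB: "card B \<le> (2 * m + 1) ^ n"
  proof -
    have "card B \<le> card (PiE {..<n} (\<lambda>_. {-int m..int m}))"
      unfolding B_def by (rule card_image_le) (auto intro!: finite_PiE)
    also have "\<dots> = (2 * m + 1) ^ n"
      by (simp add: card_PiE nat_add_distrib nat_mult_distrib)
    finally show ?thesis .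
  qed
  have finA: "finite A" using AB finB finite_subset by blast
  have "{c. G n c < 4 * real k} \<inter> set_pmf ?W \<subseteq> A"
    using walk_support[OF assms(1), of k] unfolding A_def by auto
  then have "measure_pmf.prob ?W ({c. G n c < 4 * real k} \<inter> set_pmf ?W) \<le> measure_pmf.prob ?W A"
    by (rule measure_pmf.finite_measure_mono) simp
  moreover have "measure_pmf.prob ?W {c. G n c < 4 * real k} = 1 - measure_pmf.prob ?W {c. 4 * real k \<le> G n c}"
  proof -
    have "{c. G n c < 4 * real k} = space (measure_pmf ?W) - {c. 4 * real k \<le> G n c}" by auto
    then show ?thesis using measure_pmf.prob_compl[of "{c. 4 * real k \<le> G n c}" ?W] by simp
  qed
  ultimately have PA: "measure_pmf.prob ?W A \<ge> 3/4"
    using markov_walk[OF assms] by (simp add: measure_Int_set_pmf)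
  then have "A \<noteq> {}" by auto
  then have cA: "card A > 0" using finA by (simp add: card_gt_0_iff)
  have "\<exists>c\<in>A. pmf ?W c \<ge> measure_pmf.prob ?W A / card A"
  proof (rule ccontr)
    assume "\<not> ?thesis"
    then have "\<forall>c\<in>A. pmf ?W c < measure_pmf.prob ?W A / card A" by auto
    then have "(\<Sum>c\<in>A. pmf ?W c) < (\<Sum>c\<in>A. measure_pmf.prob ?W A / card A)"
      using \<open>A \<noteq> {}\<close> finA by (intro sum_strict_mono) auto
    also have "\<dots> = measure_pmf.prob ?W A" using cA by simp
    finally show False using finA by (simp add: measure_measure_pmf_finite)
  qed
  then obtain c where c: "pmf ?W c \<ge> measure_pmf.prob ?W A / card A" by blast
  have sk: "sqrt (real k) \<ge> 1" using assms by simp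
  have "real (2 * m + 1) \<le> 5 * sqrt (real k)"
  proof -
    have "real m \<le> 2 * sqrt (real k)" unfolding m_def
      by (rule of_nat_floor) simp
    then show ?thesis using sk by linarith
  qed
  have "real (card A) \<le> real ((2 * m + 1) ^ n)"
    using card_mono[OF finB AB] cardB by linarith
  also have "\<dots> \<le> (5 * sqrt (real k)) ^ n"
    unfolding of_nat_power by (rule power_mono) (use \<open>real (2 * m + 1) \<le> 5 * sqrt (real k)\<close> in auto)
  also have "\<dots> = 5 ^ n * real k powr (real n / 2)"
  proof -
    have "sqrt (real k) ^ n = real k powr (real n / 2)"
      proof -
      have "sqrt (real k) ^ n = (real k powr (1/2)) ^ n" by (simp add: powr_half_sqrt)
      also have "\<dots> = (real k powr (1/2)) powr real n"
        using assms by (subst powr_realpow) auto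
      also have "\<dots> = real k powr (real n / 2)" by (simp add: powr_powr)
      finally show ?thesis .
    qed
    then show ?thesis by (simp add: power_mult_distrib)
  qed
  finally have cardle: "real (card A) \<le> 5 ^ n * real k powr (real n / 2)" .
  have "(3/4) / (5 ^ n * real k powr (real n / 2)) \<le> measure_pmf.prob ?W A / card A"
    using PA cardle cA by (intro frac_le) auto
  with c show ?thesis by (meson order_trans)
qed

lemma measure_sub_cbox:
  fixes S :: "(real ^ 'd) set"
  assumes "S \<subseteq> cbox a b"
  shows "measure lborel S \<le> measure lborel (cbox a b)"
proof (cases "S \<in> sets lborel")
  case True
  then show ?thesis using assms
    by (intro measure_mono_fmeasurable) auto
next
  case False
  then show ?thesis by (simp add: measure_notin_sets)
qed

lemma torus_cbox: "torus \<subseteq> cbox (0::real^'d) 1"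
  by (auto simp: torus_def mem_box_cart less_imp_le)

lemma haarU_bounds: "0 \<le> haarU B" "haarU (B :: (real^'d) set) \<le> measure lborel (cbox (0::real^'d) 1)"
  unfolding haarU_def using torus_cbox by (auto intro!: measure_sub_cbox)

lemma disc_ge:
  fixes P :: "(real ^ 'd) pmf"
  assumes "B \<in> torus_boxes"
  shows "discrepancy P \<ge> \<bar>measure_pmf.prob P B - haarU B\<bar>"
  unfolding discrepancy_def
proof (rule cSUP_upper[OF assms])
  have "\<bar>measure_pmf.prob P B' - haarU B'\<bar> \<le> 1 + measure lborel (cbox (0::real^'d) 1)" for B'
  proof -
    have "measure_pmf.prob P B' \<le> 1" "measure_pmf.prob P B' \<ge> 0"
      by (simp_all add: measure_pmf.prob_le_1)
    then show ?thesis using haarU_bounds[of B'] unfolding abs_le_iff by linarith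
  qed
  then show "bdd_above ((\<lambda>B. \<bar>measure_pmf.prob P B - haarU B\<bar>) ` torus_boxes)"
    by (meson bdd_aboveI2)
qed

lemma small_box:
  fixes x :: "real ^ 'd"
  assumes x: "x \<in> torus" and e: "0 < e" "e \<le> 1" "\<And>j. e < 1 - x $ j"
  shows "torus_box x (\<chi> j. e) \<in> torus_boxes" "x \<in> torus_box x (\<chi> j. e)"
    "haarU (torus_box x (\<chi> j. e)) \<le> e"
proof -
  show "torus_box x (\<chi> j. e) \<in> torus_boxes"
    unfolding torus_boxes_def using e by (intro CollectI exI[of _ x] exI[of _ "\<chi> j. e"]) auto
  show "x \<in> torus_box x (\<chi> j. e)"
    unfolding torus_box_def using x e by auto
  have sub: "torus_box x (\<chi> j. e) \<inter> torus \<subseteq> cbox x (x + (\<chi> j. e))"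
  proof
    fix y assume y: "y \<in> torus_box x (\<chi> j. e) \<inter> torus"
    have "x $ j \<le> y $ j \<and> y $ j \<le> x $ j + e" for j
    proof -
      have yt: "0 \<le> y $ j" "y $ j < 1" "0 \<le> x $ j" "x $ j < 1"
        using y x by (auto simp: torus_def)
      have fr: "frac (y $ j - x $ j) < e" using y by (auto simp: torus_box_def)
      show ?thesis
      proof (cases "x $ j \<le> y $ j")
        case True
        then have "frac (y $ j - x $ j) = y $ j - x $ j" using yt by (simp add: frac_eq)
        then show ?thesis using True fr by simp
      next
        case False
        then have "frac (y $ j - x $ j + 1) = y $ j - x $ j + 1" using yt by (simp add: frac_eq)
        then have "frac (y $ j - x $ j) = y $ j - x $ j + 1" by (simp add: frac_1_eq)
        then show ?thesis using fr e(3)[of j] yt by linarith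
      qed
    qed
    then show "y \<in> cbox x (x + (\<chi> j. e))" by (auto simp: mem_box_cart)
  qed
  have "haarU (torus_box x (\<chi> j. e)) \<le> measure lborel (cbox x (x + (\<chi> j. e)))"
    unfolding haarU_def by (rule measure_sub_cbox[OF sub])
  also have "\<dots> = e ^ CARD('d)"
  proof -
    have "x \<in> cbox x (x + (\<chi> j. e))" using e by (auto simp: mem_box_cart)
    then have "cbox x (x + (\<chi> j. e)) \<noteq> {}" by auto
    then show ?thesis by (subst content_cbox_cart) auto
  qed
  also have "\<dots> \<le> e ^ 1"
    using e by (intro power_decreasing) auto
  finally show "haarU (torus_box x (\<chi> j. e)) \<le> e" by simp
qed

lemma disc_atom:
  fixes x :: "real ^ 'd" and P :: "(real^'d) pmf"
  assumes x: "x \<in> torus"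
  shows "discrepancy P \<ge> pmf P x"
proof (rule ccontr)
  assume less: "\<not> discrepancy P \<ge> pmf P x"
  define e0 where "e0 = Min ((\<lambda>j. 1 - x $ j) ` UNIV)"
  have "e0 > 0" unfolding e0_def using x by (auto simp: torus_def)
  define e where "e = min (min (e0/2) (1/2)) ((pmf P x - discrepancy P)/2)"
  have e: "0 < e" "e \<le> 1" "\<And>j. e < 1 - x $ j"
  proof -
    show "0 < e" using \<open>e0 > 0\<close> less unfolding e_def by auto
    show "e \<le> 1" unfolding e_def by auto
    fix j
    have "e0 \<le> 1 - x $ j" unfolding e0_def by (rule Min_le) auto
    then show "e < 1 - x $ j" using \<open>e0 > 0\<close> unfolding e_def by linarith
  qed
  note sb = small_box[OF x e]
  have "measure_pmf.prob P {x} \<le> measure_pmf.prob P (torus_box x (\<chi> j. e))"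
    using sb(2) by (intro measure_pmf.finite_measure_mono) auto
  then have "measure_pmf.prob P (torus_box x (\<chi> j. e)) \<ge> pmf P x"
    by (simp add: measure_pmf_single)
  then have "discrepancy P \<ge> pmf P x - e"
    using disc_ge[OF sb(1), of P] sb(3) by linarith
  moreover have "e \<le> (pmf P x - discrepancy P)/2" unfolding e_def by linarith
  ultimately show False using less by argo
qed

theorem theorem1:
  fixes \<alpha> :: "nat \<Rightarrow> real ^ 'd" and n k :: nat
  assumes "n \<ge> 1"
    and "\<And>i. i < n \<Longrightarrow> \<alpha> i \<in> torus"
    and "k \<ge> 1"
  shows "discrepancy (conv_pow (stepQ n \<alpha>) k) \<ge>
           1 / (pi ^ CARD('d) * 5 ^ (n + 1) * real CARD('d) powr (real n / 2))
             * real k powr (- (real n / 2))"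
proof -
  obtain c where c: "pmf (walk n k) c \<ge> (3/4) / (5 ^ n * real k powr (real n / 2))"
    using exists_heavy[OF assms(1,3)] by blast
  have xt: "lift \<alpha> n c \<in> torus"
    by (simp add: lift_def tmod_def torus_def frac_lt_1)
  have "pmf (walk n k) c \<le> pmf (conv_pow (stepQ n \<alpha>) k) (lift \<alpha> n c)"
  proof -
    have "measure_pmf.prob (walk n k) {c} \<le> measure_pmf.prob (walk n k) (lift \<alpha> n -` {lift \<alpha> n c})"
      by (intro measure_pmf.finite_measure_mono) auto
    then show ?thesis unfolding conv_walk[OF assms(1)] pmf_map by (simp add: measure_pmf_single)
  qed
  also have "\<dots> \<le> discrepancy (conv_pow (stepQ n \<alpha>) k)"
    by (rule disc_atom[OF xt])
  finally have D: "discrepancy (conv_pow (stepQ n \<alpha>) k) \<ge> (3/4) / (5 ^ n * real k powr (real n / 2))"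
    using c by linarith
  define K where "K = real k powr (real n / 2)"
  define A where "A = pi ^ CARD('d) * 5 ^ (n + 1) * real CARD('d) powr (real n / 2)"
  have kp: "K > 0" unfolding K_def using assms by simp
  have pi1: "pi ^ CARD('d) \<ge> 1" using pi_gt3 by (intro one_le_power) linarith
  have d1: "real CARD('d) powr (real n / 2) \<ge> 1" by (intro ge_one_powr_ge_zero) auto
  have "(5::real) ^ (n + 1) * 1 \<le> 5 ^ (n + 1) * real CARD('d) powr (real n / 2)"
    using d1 by (intro mult_left_mono) auto
  also have "\<dots> = 1 * (5 ^ (n + 1) * real CARD('d) powr (real n / 2))" by simp
  also have "\<dots> \<le> pi ^ CARD('d) * (5 ^ (n + 1) * real CARD('d) powr (real n / 2))"
    using pi1 by (intro mult_right_mono) auto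
  finally have A5: "(5::real) ^ (n + 1) \<le> A" unfolding A_def by (simp add: mult.assoc)
  have "(4/3) * 5 ^ n \<le> (5::real) ^ (n + 1)" by simp
  with A5 have A43: "(4/3) * 5 ^ n \<le> A" by linarith
  have "1 / A * real k powr (- (real n / 2)) = 1 / (A * K)"
    unfolding K_def powr_minus_divide by simp
  also have "\<dots> \<le> 1 / ((4/3) * 5 ^ n * K)"
    using kp A43 by (intro frac_le mult_right_mono) auto
  also have "\<dots> = (3/4) / (5 ^ n * K)" by simp
  finally have "1 / A * real k powr (- (real n / 2)) \<le> (3/4) / (5 ^ n * K)" .
  then show ?thesis using D unfolding A_def K_def by linarith
qed

end
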